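(* Let $\overline{M}\in\{1,2,\dots\}\cup\{\infty\}$. In the random coefficients perturbed utility model described in the context, suppose that Assumptions 1–6 (as stated in the context) hold for each natural number $M\le\overline{M}$, and that the distribution $\nu$ of $\beta$ is determined by its moments of order at most $\overline{M}$ (i.e. any probability distribution having the same moments of all orders $M\le \overline{M}$ equals $\nu$). Then the distribution of $\beta$ is identified.
   Context: Model. There are $K$ goods. For each good $k\in\{1,\dots,K\}$ there is a covariate vector $x_k=(x_{k,1},\dots,x_{k,d_k})'\in\mathbb{R}^{d_k}$ and a random coefficient vector $\beta_k=(\beta_{k,1},\dots,\beta_{k,d_k})'\in\mathbb{R}^{d_k}$; write $x=(x_1',\dots,x_K')'\in\mathbb{R}^{d}$ with $d=\sum_k d_k$, and $\beta=(\beta_1',\dots,\beta_K')'$. Let $\varepsilon$ be an unobservable of unrestricted dimension taking values in a measurable space $E$, let $B\subseteq\mathbb{R}^K$ be a feasibility set and $D:B\times E\to\mathbb{R}\cup\{-\infty\}$ a disturbance. Choices satisfy $Y(x,\beta,\varepsilon)\in\arg\max_{y\in B}\sum_{k=1}^K y_k(\beta_k'x_k)+D(y,\varepsilon)$ (argmax nonempty). The average structural function is $\overline{Y}(x)=\int Y(x,\beta,\varepsilon)\,d\tau(\beta,\varepsilon)$ for a probability measure $\tau$ not depending on $x$; $\overline{Y}_k$ is its $k$-th component. Assumption 1: under $\tau$, $\beta$ and $\varepsilon$ are independent, $\tau=\nu\otimes\mu$, and $\overline{Y}(x)$ is finite. Define $\overline{Y}(x,\beta)=\int Y(x,\beta,\varepsilon)\,d\mu(\varepsilon)$,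 so $\overline{Y}(x)=\int\overline{Y}(x,\beta)\,d\nu(\beta)$. Let $\overline{B}$ be the convex hull of $B$ and $\overline{D}(y)=\sup\{\int D(\tilde Y(\varepsilon),\varepsilon)\,d\mu(\varepsilon):\tilde Y:E\to B\text{ measurable},\ \int\tilde Y\,d\mu=y\}$ ($\sup\emptyset=-\infty$). Assumption 2: (i) $\overline{Y}(x,\beta)$ equals (is the unique element of) $\arg\max_{y\in\overline{B}}\sum_k y_k(\beta_k'x_k)+\overline{D}(y)$; (ii) $\overline{B}$ is nonempty, closed, convex; (iii) $\overline{D}:\mathbb{R}^K\to\mathbb{R}\cup\{-\infty\}$ is concave, upper semicontinuous, finite at some $y\in\overline{B}$. Define $V(u)=\max_{y\in\overline{B}}\sum_k y_ku_k+\overline{D}(y)$, $u\in\mathbb{R}^K$, and $\partial_\gamma V=\partial_{\gamma_1}\cdots\partial_{\gamma_m}V$ for $\gamma\in\{1,\dots,K\}^m$. Assumption 3: all covariates are continuous, and each $x_k$ is specific to good $k$ (enters only $\beta_k'x_k$). Assumption 4 (for $M$): $\int\beta_{1,1}^M\,d\nu$ is finite, known a priori, and nonzero. Assumption 5 (for $M$): (i) for each $k$ and every $M$-th order partial derivative, $\partial_{x_{k_1,\ell_1}}\cdots\partial_{x_{k_M,\ell_M}}\overline{Y}_k(0)=\int\partial_{x_{k_1,\ell_1}}\cdots\partial_{x_{k_M,\ell_M}}\overline{Y}_k(0,\beta)\,d\nu(\beta)$; (ii) all $M$-th order moments $\int\beta_{k_1,\ell_1}\cdots\beta_{k_M,\ell_M}\,d\nu$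 exist and are finite; (iii) $V$ is $(M+1)$-times continuously differentiable near $0$; (iv) $\partial_\gamma V(0)\ne0$ for all $\gamma\in\{1,\dots,K\}^{M+1}$; (v) $\overline{Y}(x)$ is known on a neighborhood of $0$, or more generally on $H\cap\mathbb{R}^d_+$ for a neighborhood $H$ of $0$. Assumption 6 (for $M$): for each $(k_1,\dots,k_M)\in\{1,\dots,K\}^M$ there exist $\ell_m\in\{1,\dots,d_{k_m}\}$ with $\int\beta_{k_1,\ell_1}\cdots\beta_{k_M,\ell_M}\,d\nu$ existing and nonzero. Identification: a quantity is identified if it is uniquely determined by the objects assumed known (the average structural function on the stated region and the quantities assumed known a priori), i.e. all specifications $(B,D,\mu,\nu)$ satisfying the hypotheses and generating the same known objects yield the same value. *)

theory Defs
  imports "HOL-Probability.Probability"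
begin

text \<open>Goods are indexed by a finite type 'k, covariates (and random coefficients)
by a finite type 'd; good j is the good to which covariate j belongs, so that
beta_k' x_k is the sum over the covariates j with good j = k of beta_j * x_j.\<close>

definition util :: "('d::finite \<Rightarrow> 'k::finite) \<Rightarrow> real^'d \<Rightarrow> real^'d \<Rightarrow> real^'k" where
  "util good x \<beta> = (\<chi> k. \<Sum>j\<in>{j. good j = k}. \<beta>$j * x$j)"

definition choice_rule ::
  "('d::finite \<Rightarrow> 'k::finite) \<Rightarrow> (real^'k) set \<Rightarrow> (real^'k \<Rightarrow> 'e \<Rightarrow> ereal) \<Rightarrow> 'e measure
   \<Rightarrow> (real^'d \<Rightarrow> real^'d \<Rightarrow> 'e \<Rightarrow> real^'k) \<Rightarrow> bool" where
  "choice_rule good B D \<mu> Y \<longleftrightarrow>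
     (\<forall>x \<beta>. \<forall>\<epsilon>\<in>space \<mu>. Y x \<beta> \<epsilon> \<in> B \<and>
        (\<forall>y\<in>B. ereal (y \<bullet> util good x \<beta>) + D y \<epsilon>
                 \<le> ereal (Y x \<beta> \<epsilon> \<bullet> util good x \<beta>) + D (Y x \<beta> \<epsilon>) \<epsilon>))"

definition ASF :: "(real^'d::finite) measure \<Rightarrow> 'e measure \<Rightarrow> (real^'d \<Rightarrow> real^'d \<Rightarrow> 'e \<Rightarrow> real^'k::finite)
   \<Rightarrow> real^'d \<Rightarrow> real^'k" where
  "ASF \<nu> \<mu> Y x = (\<integral>z. Y x (fst z) (snd z) \<partial>(\<nu> \<Otimes>\<^sub>M \<mu>))"

definition ASFb :: "'e measure \<Rightarrow> (real^'d::finite \<Rightarrow> real^'d \<Rightarrow> 'e \<Rightarrow> real^'k::finite)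
   \<Rightarrow> real^'d \<Rightarrow> real^'d \<Rightarrow> real^'k" where
  "ASFb \<mu> Y x \<beta> = (\<integral>\<epsilon>. Y x \<beta> \<epsilon> \<partial>\<mu>)"

definition qint :: "'e measure \<Rightarrow> ('e \<Rightarrow> ereal) \<Rightarrow> ereal" where
  "qint \<mu> f = enn2ereal (\<integral>\<^sup>+\<epsilon>. e2ennreal (f \<epsilon>) \<partial>\<mu>) - enn2ereal (\<integral>\<^sup>+\<epsilon>. e2ennreal (- f \<epsilon>) \<partial>\<mu>)"

text \<open>Dbar(y) = sup of int D(Yt(eps),eps) d mu over measurable Yt : E -> B with int Yt d mu = y
  (for which that integral exists); Sup {} = -infinity.\<close>
definition Dbar :: "'e measure \<Rightarrow> (real^'k::finite) set \<Rightarrow> (real^'k \<Rightarrow> 'e \<Rightarrow> ereal) \<Rightarrow> real^'k \<Rightarrow> ereal" where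
  "Dbar \<mu> B D y = Sup {qint \<mu> (\<lambda>\<epsilon>. D (Yt \<epsilon>) \<epsilon>) | Yt.
      Yt \<in> borel_measurable \<mu> \<and> (\<forall>\<epsilon>\<in>space \<mu>. Yt \<epsilon> \<in> B) \<and> integrable \<mu> Yt \<and> (\<integral>\<epsilon>. Yt \<epsilon> \<partial>\<mu>) = y \<and>
      (\<lambda>\<epsilon>. D (Yt \<epsilon>) \<epsilon>) \<in> borel_measurable \<mu> \<and>
      ((\<integral>\<^sup>+\<epsilon>. e2ennreal (D (Yt \<epsilon>) \<epsilon>) \<partial>\<mu>) < \<infinity> \<or> (\<integral>\<^sup>+\<epsilon>. e2ennreal (- D (Yt \<epsilon>) \<epsilon>) \<partial>\<mu>) < \<infinity>)}"

definition Vfun :: "'e measure \<Rightarrow> (real^'k::finite) set \<Rightarrow> (real^'k \<Rightarrow> 'e \<Rightarrow> ereal) \<Rightarrow> real^'k \<Rightarrow> ereal" where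
  "Vfun \<mu> B D u = Sup {ereal (y \<bullet> u) + Dbar \<mu> B D y | y. y \<in> convex hull B}"

primrec ipd :: "'i::finite list \<Rightarrow> (real^'i \<Rightarrow> real) \<Rightarrow> real^'i \<Rightarrow> real" where
  "ipd [] f = f"
| "ipd (i # \<gamma>) f = (\<lambda>x. deriv (\<lambda>t. ipd \<gamma> f (x + t *\<^sub>R axis i 1)) 0)"

primrec ipd_exists :: "'i::finite list \<Rightarrow> (real^'i \<Rightarrow> real) \<Rightarrow> real^'i \<Rightarrow> bool" where
  "ipd_exists [] f x = True"
| "ipd_exists (i # \<gamma>) f x =
     ((\<forall>\<^sub>F t in nhds (0::real). ipd_exists \<gamma> f (x + t *\<^sub>R axis i 1)) \<and>
      (\<lambda>t. ipd \<gamma> f (x + t *\<^sub>R axis i 1)) field_differentiable (at (0::real)))"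

definition Ck_near :: "nat \<Rightarrow> (real^'i::finite \<Rightarrow> real) \<Rightarrow> real^'i \<Rightarrow> bool" where
  "Ck_near m f a \<longleftrightarrow> (\<exists>N. open N \<and> a \<in> N \<and>
     (\<forall>\<gamma>::'i list. length \<gamma> \<le> m \<longrightarrow> (\<forall>u\<in>N. ipd_exists \<gamma> f u) \<and> continuous_on N (ipd \<gamma> f)))"

definition mono_fn :: "'d::finite list \<Rightarrow> real^'d \<Rightarrow> real" where
  "mono_fn \<gamma> \<beta> = (\<Prod>j\<leftarrow>\<gamma>. \<beta>$j)"

definition assm1 :: "(real^'d::finite) measure \<Rightarrow> 'e measure \<Rightarrow> (real^'d \<Rightarrow> real^'d \<Rightarrow> 'e \<Rightarrow> real^'k::finite) \<Rightarrow> bool" where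
  "assm1 \<nu> \<mu> Y \<longleftrightarrow> prob_space \<nu> \<and> prob_space \<mu> \<and> sets \<nu> = sets borel \<and>
     (\<forall>x. integrable (\<nu> \<Otimes>\<^sub>M \<mu>) (\<lambda>z. Y x (fst z) (snd z)))"

definition assm2 :: "('d::finite \<Rightarrow> 'k::finite) \<Rightarrow> (real^'k) set \<Rightarrow> (real^'k \<Rightarrow> 'e \<Rightarrow> ereal) \<Rightarrow> 'e measure
   \<Rightarrow> (real^'d \<Rightarrow> real^'d \<Rightarrow> 'e \<Rightarrow> real^'k) \<Rightarrow> bool" where
  "assm2 good B D \<mu> Y \<longleftrightarrow>
     (\<forall>x \<beta>. {y \<in> convex hull B. \<forall>z \<in> convex hull B.
               ereal (z \<bullet> util good x \<beta>) + Dbar \<mu> B D z \<le> ereal (y \<bullet> util good x \<beta>) + Dbar \<mu> B D y}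
             = {ASFb \<mu> Y x \<beta>}) \<and>
     convex hull B \<noteq> {} \<and> closed (convex hull B) \<and>
     (\<forall>y z t. 0 < t \<and> t < 1 \<longrightarrow>
        ereal t * Dbar \<mu> B D y + ereal (1 - t) * Dbar \<mu> B D z \<le> Dbar \<mu> B D (t *\<^sub>R y + (1 - t) *\<^sub>R z)) \<and>
     (\<forall>y c. Dbar \<mu> B D y < c \<longrightarrow> (\<forall>\<^sub>F z in at y. Dbar \<mu> B D z < c)) \<and>
     (\<forall>y. Dbar \<mu> B D y \<noteq> \<infinity>) \<and>
     (\<exists>y\<in>convex hull B. Dbar \<mu> B D y \<noteq> -\<infinity>)"

definition assm4 :: "nat \<Rightarrow> 'd::finite \<Rightarrow> (real^'d) measure \<Rightarrow> bool" where
  "assm4 M j0 \<nu> \<longleftrightarrow> integrable \<nu> (\<lambda>\<beta>. (\<beta>$j0) ^ M) \<and> (\<integral>\<beta>. (\<beta>$j0) ^ M \<partial>\<nu>) \<noteq> 0"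

definition assm5 :: "nat \<Rightarrow> (real^'k::finite) set \<Rightarrow> (real^'k \<Rightarrow> 'e \<Rightarrow> ereal) \<Rightarrow> 'e measure
   \<Rightarrow> (real^'d::finite) measure \<Rightarrow> (real^'d \<Rightarrow> real^'d \<Rightarrow> 'e \<Rightarrow> real^'k) \<Rightarrow> bool" where
  "assm5 M B D \<mu> \<nu> Y \<longleftrightarrow>
     (\<forall>k. \<forall>\<gamma>::'d list. length \<gamma> = M \<longrightarrow>
        ipd_exists \<gamma> (\<lambda>x. ASF \<nu> \<mu> Y x $ k) 0 \<and>
        (\<forall>\<beta>. ipd_exists \<gamma> (\<lambda>x. ASFb \<mu> Y x \<beta> $ k) 0) \<and>
        integrable \<nu> (\<lambda>\<beta>. ipd \<gamma> (\<lambda>x. ASFb \<mu> Y x \<beta> $ k) 0) \<and>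
        ipd \<gamma> (\<lambda>x. ASF \<nu> \<mu> Y x $ k) 0 = (\<integral>\<beta>. ipd \<gamma> (\<lambda>x. ASFb \<mu> Y x \<beta> $ k) 0 \<partial>\<nu>)) \<and>
     (\<forall>\<gamma>::'d list. length \<gamma> = M \<longrightarrow> integrable \<nu> (mono_fn \<gamma>)) \<and>
     Ck_near (Suc M) (\<lambda>u. real_of_ereal (Vfun \<mu> B D u)) 0 \<and>
     (\<forall>\<gamma>::'k list. length \<gamma> = Suc M \<longrightarrow> ipd \<gamma> (\<lambda>u. real_of_ereal (Vfun \<mu> B D u)) 0 \<noteq> 0)"

definition assm6 :: "nat \<Rightarrow> ('d::finite \<Rightarrow> 'k::finite) \<Rightarrow> (real^'d) measure \<Rightarrow> bool" where
  "assm6 M good \<nu> \<longleftrightarrow> (\<forall>ks::'k list. length ks = M \<longrightarrow>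
     (\<exists>\<gamma>. map good \<gamma> = ks \<and> integrable \<nu> (mono_fn \<gamma>) \<and> (\<integral>\<beta>. mono_fn \<gamma> \<beta> \<partial>\<nu>) \<noteq> 0))"

text \<open>A specification (B, D, mu, nu, Y) of the model satisfying Assumptions 1-6 for every
  natural number 1 <= M <= Mbar (Assumption 3 is built into the index structure).\<close>
definition spec_ok ::
  "('d::finite \<Rightarrow> 'k::finite) \<Rightarrow> 'd \<Rightarrow> enat \<Rightarrow> (real^'k) set \<Rightarrow> (real^'k \<Rightarrow> 'e \<Rightarrow> ereal) \<Rightarrow> 'e measure
   \<Rightarrow> (real^'d) measure \<Rightarrow> (real^'d \<Rightarrow> real^'d \<Rightarrow> 'e \<Rightarrow> real^'k) \<Rightarrow> bool" where
  "spec_ok good j0 Mbar B D \<mu> \<nu> Y \<longleftrightarrow>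
     (\<forall>y\<in>B. \<forall>\<epsilon>\<in>space \<mu>. D y \<epsilon> \<noteq> \<infinity>) \<and>
     choice_rule good B D \<mu> Y \<and>
     assm1 \<nu> \<mu> Y \<and> assm2 good B D \<mu> Y \<and>
     (\<forall>M. 1 \<le> M \<and> enat M \<le> Mbar \<longrightarrow> assm4 M j0 \<nu> \<and> assm5 M B D \<mu> \<nu> Y \<and> assm6 M good \<nu>)"

definition moment_determinate :: "enat \<Rightarrow> (real^'d::finite) measure \<Rightarrow> bool" where
  "moment_determinate Mbar \<nu> \<longleftrightarrow>
     (\<forall>\<nu>'. prob_space \<nu>' \<and> sets \<nu>' = sets borel \<and>
        (\<forall>\<gamma>::'d list. 1 \<le> length \<gamma> \<and> enat (length \<gamma>) \<le> Mbar \<longrightarrow>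
            integrable \<nu>' (mono_fn \<gamma>) \<and> (\<integral>\<beta>. mono_fn \<gamma> \<beta> \<partial>\<nu>') = (\<integral>\<beta>. mono_fn \<gamma> \<beta> \<partial>\<nu>))
        \<longrightarrow> \<nu>' = \<nu>)"

end

theory Submission
  imports Defs
begin


lemma ipd_append: "ipd (xs @ ys) f = ipd xs (ipd ys f)"
  by (induction xs) auto

lemma ipd_exists_append: "ipd_exists (xs @ ys) f u \<Longrightarrow> ipd_exists xs (ipd ys f) u"
proof (induction xs arbitrary: u)
  case Nil then show ?case by simp
next
  case (Cons i xs)
  then show ?case by (auto simp: ipd_append elim: eventually_mono)
qed

lemma ev_line: fixes v :: "'a::real_normed_vector" shows "open U \<Longrightarrow> x \<in> U \<Longrightarrow> \<forall>\<^sub>F t in nhds (0::real). x + t *\<^sub>R v \<in> U"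
proof -
  assume U: "open U" "x \<in> U"
  have c: "continuous_on UNIV (\<lambda>t::real. x + t *\<^sub>R v)"
    by (intro continuous_on_add continuous_on_const continuous_on_scaleR continuous_on_id)
  have "open ((\<lambda>t::real. x + t *\<^sub>R v) -` U)"
    using continuous_on_open_vimage[OF open_UNIV, THEN iffD1, OF c, rule_format, OF U(1)] by simp
  moreover have "0 \<in> (\<lambda>t::real. x + t *\<^sub>R v) -` U" using U by simp
  ultimately show ?thesis unfolding eventually_nhds by blast
qed

lemma ipd_local:
  assumes "open U" "\<forall>x\<in>U. f x = g x"
  shows "x \<in> U \<Longrightarrow> ipd \<gamma> f x = ipd \<gamma> g x"
proof (induction \<gamma> arbitrary: x)
  case Nil then show ?case using assms by simp
next
  case (Cons i \<gamma>)
  have "\<forall>\<^sub>F t in nhds (0::real). ipd \<gamma> f (x + t *\<^sub>R axis i 1) = ipd \<gamma> g (x + t *\<^sub>R axis i 1)"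
    using ev_line[OF assms(1) Cons.prems, of "axis i 1"] by (auto elim!: eventually_mono intro: Cons.IH)
  then show ?case by (simp add: deriv_cong_ev)
qed

lemma deriv_right_eq:
  fixes f g :: "real \<Rightarrow> real"
  assumes "f field_differentiable at 0" "g field_differentiable at 0"
    "\<forall>\<^sub>F t in at_right 0. f t = g t" "f 0 = g 0"
  shows "deriv f 0 = deriv g 0"
proof -
  have "((\<lambda>y. (f y - f 0) / (y - 0)) \<longlongrightarrow> deriv f 0) (at 0)"
    using field_differentiable_derivI[OF assms(1)] has_field_derivative_iff by blast
  then have 1: "((\<lambda>y. (f y - f 0) / (y - 0)) \<longlongrightarrow> deriv f 0) (at_right 0)"
    by (rule tendsto_within_subset) auto
  have "((\<lambda>y. (g y - g 0) / (y - 0)) \<longlongrightarrow> deriv g 0) (at 0)"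
    using field_differentiable_derivI[OF assms(2)] has_field_derivative_iff by blast
  then have 2: "((\<lambda>y. (g y - g 0) / (y - 0)) \<longlongrightarrow> deriv g 0) (at_right 0)"
    by (rule tendsto_within_subset) auto
  have "\<forall>\<^sub>F y in at_right 0. (g y - g 0) / (y - 0) = (f y - f 0) / (y - 0)"
    using assms(3,4) by (auto elim!: eventually_mono)
  from tendsto_cong[OF this] 2 have 3: "((\<lambda>y. (f y - f 0) / (y - 0)) \<longlongrightarrow> deriv g 0) (at_right 0)"
    by simp
  show ?thesis using tendsto_unique[OF trivial_limit_at_right_real 1 3] .
qed

lemma deriv_min_eq:
  fixes h :: "real \<Rightarrow> real"
  assumes "h field_differentiable at 0" "\<forall>t. h 0 + t * c \<le> h t"
  shows "deriv h 0 = c"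
proof -
  have "((\<lambda>t. h t - t * c) has_real_derivative (deriv h 0 - 1 * c)) (at 0)"
    by (intro DERIV_diff DERIV_cmult_right DERIV_ident field_differentiable_derivI[OF assms(1)])
  from DERIV_local_min[OF this, of 1] show ?thesis using assms(2)
    by (simp add: algebra_simps)
qed

lemma ipd_orthant:
  fixes f1 f2 :: "real^'n \<Rightarrow> real"
  assumes H: "open H" and eq: "\<forall>x\<in>H. (\<forall>j. 0 \<le> x$j) \<longrightarrow> f1 x = f2 x"
  shows "x \<in> H \<Longrightarrow> (\<forall>j. 0 \<le> x$j) \<Longrightarrow> ipd_exists \<gamma> f1 x \<Longrightarrow> ipd_exists \<gamma> f2 x
         \<Longrightarrow> ipd \<gamma> f1 x = ipd \<gamma> f2 x"
proof (induction \<gamma> arbitrary: x)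
  case Nil then show ?case using eq by simp
next
  case (Cons i \<gamma>)
  let ?p = "\<lambda>t::real. x + t *\<^sub>R axis i 1"
  have e1: "\<forall>\<^sub>F t in nhds 0. ipd_exists \<gamma> f1 (?p t)" and d1: "(\<lambda>t. ipd \<gamma> f1 (?p t)) field_differentiable at 0"
    using Cons.prems(3) by auto
  have e2: "\<forall>\<^sub>F t in nhds 0. ipd_exists \<gamma> f2 (?p t)" and d2: "(\<lambda>t. ipd \<gamma> f2 (?p t)) field_differentiable at 0"
    using Cons.prems(4) by auto
  have eH: "\<forall>\<^sub>F t in nhds 0. ?p t \<in> H" using ev_line[OF H Cons.prems(1)] .
  have "\<forall>\<^sub>F t in nhds 0. ipd_exists \<gamma> f1 (?p t) \<and> ipd_exists \<gamma> f2 (?p t) \<and> ?p t \<in> H"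
    using e1 e2 eH by (intro eventually_conj)
  then have "\<forall>\<^sub>F t in at_right 0. ipd_exists \<gamma> f1 (?p t) \<and> ipd_exists \<gamma> f2 (?p t) \<and> ?p t \<in> H"
    using filter_leD[OF at_within_le_nhds] by blast
  moreover have "\<forall>\<^sub>F t in at_right (0::real). 0 < t" by (rule eventually_at_right_less)
  ultimately have "\<forall>\<^sub>F t in at_right 0. ipd \<gamma> f1 (?p t) = ipd \<gamma> f2 (?p t)"
  proof eventually_elim
    case (elim t)
    have "\<forall>j. 0 \<le> ?p t $ j" using Cons.prems(2) elim by (auto simp: axis_def)
    then show ?case using Cons.IH elim by blast
  qed
  moreover have "ipd \<gamma> f1 x = ipd \<gamma> f2 x"
    using Cons.IH[OF Cons.prems(1,2)] eventually_nhds_x_imp_x[OF e1] eventually_nhds_x_imp_x[OF e2] by simp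
  ultimately show ?case using deriv_right_eq[OF d1 d2] by simp
qed

lemma pd_DERIV:
  assumes "ipd_exists (a#\<gamma>) f (p + s *\<^sub>R axis a 1)"
  shows "((\<lambda>s. ipd \<gamma> f (p + s *\<^sub>R axis a 1)) has_real_derivative ipd (a#\<gamma>) f (p + s *\<^sub>R axis a 1)) (at s)"
proof -
  let ?G = "\<lambda>s. ipd \<gamma> f (p + s *\<^sub>R axis a 1)"
  have eq: "(\<lambda>t. ?G (t + s)) = (\<lambda>t. ipd \<gamma> f ((p + s *\<^sub>R axis a 1) + t *\<^sub>R axis a 1))"
    by (simp add: algebra_simps scaleR_add_left)
  have "(\<lambda>t. ipd \<gamma> f ((p + s *\<^sub>R axis a 1) + t *\<^sub>R axis a 1)) field_differentiable at 0"
    using assms by simp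
  from field_differentiable_derivI[OF this]
  have "((\<lambda>t. ?G (t + s)) has_real_derivative ipd (a#\<gamma>) f (p + s *\<^sub>R axis a 1)) (at 0)"
    unfolding eq by simp
  then show ?thesis using DERIV_shift[of ?G _ 0 s] by simp
qed

lemma mv2:
  fixes f :: "real^'n \<Rightarrow> real"
  assumes ex: "\<forall>u\<in>N. ipd_exists [a] f u \<and> ipd_exists [b,a] f u"
    and h: "0 < h" and box: "\<forall>s t. 0 \<le> s \<and> s \<le> h \<and> 0 \<le> t \<and> t \<le> h \<longrightarrow> u + s *\<^sub>R axis a 1 + t *\<^sub>R axis b 1 \<in> N"
  shows "\<exists>s t. 0 < s \<and> s < h \<and> 0 < t \<and> t < h \<and>
    f (u + h *\<^sub>R axis a 1 + h *\<^sub>R axis b 1) - f (u + h *\<^sub>R axis a 1) - f (u + h *\<^sub>R axis b 1) + f u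
    = h * h * ipd [b,a] f (u + s *\<^sub>R axis a 1 + t *\<^sub>R axis b 1)"
proof -
  let ?ea = "axis a 1 :: real^'n" and ?eb = "axis b 1 :: real^'n"
  define \<phi> where "\<phi> s = f (u + h *\<^sub>R ?eb + s *\<^sub>R ?ea) - f (u + s *\<^sub>R ?ea)" for s
  define \<phi>' where "\<phi>' s = ipd [a] f (u + h *\<^sub>R ?eb + s *\<^sub>R ?ea) - ipd [a] f (u + s *\<^sub>R ?ea)" for s
  have "\<And>s. 0 \<le> s \<Longrightarrow> s \<le> h \<Longrightarrow> (\<phi> has_real_derivative \<phi>' s) (at s)"
  proof -
    fix s assume s: "0 \<le> s" "s \<le> h"
    have m1: "u + h *\<^sub>R ?eb + s *\<^sub>R ?ea \<in> N" using box[rule_format, of s h] s h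
      by (simp add: add_ac)
    have m2: "u + s *\<^sub>R ?ea \<in> N" using box[rule_format, of s 0] s h by simp
    have d1: "((\<lambda>s. ipd [] f (u + h *\<^sub>R ?eb + s *\<^sub>R ?ea)) has_real_derivative ipd [a] f (u + h *\<^sub>R ?eb + s *\<^sub>R ?ea)) (at s)"
      by (rule pd_DERIV) (use ex m1 in auto)
    have d2: "((\<lambda>s. ipd [] f (u + s *\<^sub>R ?ea)) has_real_derivative ipd [a] f (u + s *\<^sub>R ?ea)) (at s)"
      by (rule pd_DERIV) (use ex m2 in auto)
    show "(\<phi> has_real_derivative \<phi>' s) (at s)"
      unfolding \<phi>_def[abs_def] \<phi>'_def using DERIV_diff[OF d1 d2] by simp
  qed
  from MVT2[OF h this] obtain s1 where s1: "0 < s1" "s1 < h" "\<phi> h - \<phi> 0 = (h - 0) * \<phi>' s1" by blast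
  define \<psi> where "\<psi> t = ipd [a] f (u + s1 *\<^sub>R ?ea + t *\<^sub>R ?eb)" for t
  have "\<And>t. 0 \<le> t \<Longrightarrow> t \<le> h \<Longrightarrow> (\<psi> has_real_derivative ipd [b,a] f (u + s1 *\<^sub>R ?ea + t *\<^sub>R ?eb)) (at t)"
  proof -
    fix t assume t: "0 \<le> t" "t \<le> h"
    have m: "u + s1 *\<^sub>R ?ea + t *\<^sub>R ?eb \<in> N" using box[rule_format, of s1 t] s1 t by simp
    show "(\<psi> has_real_derivative ipd [b,a] f (u + s1 *\<^sub>R ?ea + t *\<^sub>R ?eb)) (at t)"
      unfolding \<psi>_def[abs_def] by (rule pd_DERIV) (use ex m in auto)
  qed
  from MVT2[OF h this] obtain t1 where t1: "0 < t1" "t1 < h"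
    "\<psi> h - \<psi> 0 = (h - 0) * ipd [b,a] f (u + s1 *\<^sub>R ?ea + t1 *\<^sub>R ?eb)" by blast
  have "\<phi>' s1 = \<psi> h - \<psi> 0" unfolding \<phi>'_def \<psi>_def by (simp add: add_ac)
  then have "\<phi> h - \<phi> 0 = h * h * ipd [b,a] f (u + s1 *\<^sub>R ?ea + t1 *\<^sub>R ?eb)"
    using s1(3) t1(3) by simp
  moreover have "\<phi> h - \<phi> 0 = f (u + h *\<^sub>R ?ea + h *\<^sub>R ?eb) - f (u + h *\<^sub>R ?ea) - f (u + h *\<^sub>R ?eb) + f u"
    unfolding \<phi>_def by (simp add: add_ac)
  ultimately show ?thesis using s1(1,2) t1(1,2) by metis
qed

lemma norm_two_axis:
  "norm (s *\<^sub>R (axis a 1 :: real^'n) + t *\<^sub>R axis b 1) \<le> \<bar>s\<bar> + \<bar>t\<bar>"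
  by (rule order_trans[OF norm_triangle_ineq]) (simp add: norm_axis_1)

lemma schwarz:
  fixes f :: "real^'n \<Rightarrow> real"
  assumes N: "open N"
    and ex: "\<forall>u\<in>N. ipd_exists [a] f u \<and> ipd_exists [b] f u \<and> ipd_exists [a,b] f u \<and> ipd_exists [b,a] f u"
    and c1: "continuous_on N (ipd [a,b] f)" and c2: "continuous_on N (ipd [b,a] f)"
    and u: "u \<in> N"
  shows "ipd [a,b] f u = ipd [b,a] f u"
proof (rule ccontr)
  assume ne: "ipd [a,b] f u \<noteq> ipd [b,a] f u"
  define e where "e = \<bar>ipd [a,b] f u - ipd [b,a] f u\<bar> / 2"
  have e: "e > 0" using ne by (simp add: e_def)
  obtain r where r: "r > 0" "ball u r \<subseteq> N" using N u openE by blast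
  have "isCont (ipd [a,b] f) u" using c1 N u continuous_on_eq_continuous_at by blast
  then obtain d1 where d1: "d1 > 0" "\<forall>x'. dist x' u < d1 \<longrightarrow> dist (ipd [a,b] f x') (ipd [a,b] f u) < e"
    using e continuous_at_eps_delta by blast
  have "isCont (ipd [b,a] f) u" using c2 N u continuous_on_eq_continuous_at by blast
  then obtain d2 where d2: "d2 > 0" "\<forall>x'. dist x' u < d2 \<longrightarrow> dist (ipd [b,a] f x') (ipd [b,a] f u) < e"
    using e continuous_at_eps_delta by blast
  define h where "h = min r (min d1 d2) / 4"
  have h: "h > 0" "2 * h < r" "2 * h < d1" "2 * h < d2" using r d1 d2 by (auto simp: h_def)
  have close: "dist (u + s *\<^sub>R axis c 1 + t *\<^sub>R axis c' 1) u \<le> 2 * h"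
    if "0 \<le> s" "s \<le> h" "0 \<le> t" "t \<le> h" for s t and c c'
  proof -
    have "dist (u + s *\<^sub>R axis c 1 + t *\<^sub>R axis c' 1) u = norm (s *\<^sub>R (axis c 1 :: real^'n) + t *\<^sub>R axis c' 1)"
      by (simp add: dist_norm)
    also have "\<dots> \<le> \<bar>s\<bar> + \<bar>t\<bar>" by (rule norm_two_axis)
    finally show ?thesis using that by simp
  qed
  have box: "\<forall>s t. 0 \<le> s \<and> s \<le> h \<and> 0 \<le> t \<and> t \<le> h \<longrightarrow> u + s *\<^sub>R axis c 1 + t *\<^sub>R axis c' 1 \<in> N" for c c'
  proof (intro allI impI)
    fix s t assume "0 \<le> s \<and> s \<le> h \<and> 0 \<le> t \<and> t \<le> h"
    then have "dist (u + s *\<^sub>R axis c 1 + t *\<^sub>R axis c' 1) u < r" using close[of s t c c'] h by linarith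
    then show "u + s *\<^sub>R axis c 1 + t *\<^sub>R axis c' 1 \<in> N" using r(2) by (auto simp: dist_commute)
  qed
  have exab: "\<forall>u\<in>N. ipd_exists [a] f u \<and> ipd_exists [b,a] f u" using ex by blast
  have exba: "\<forall>u\<in>N. ipd_exists [b] f u \<and> ipd_exists [a,b] f u" using ex by blast
  obtain s1 t1 where st1: "0 < s1" "s1 < h" "0 < t1" "t1 < h"
    "f (u + h *\<^sub>R axis a 1 + h *\<^sub>R axis b 1) - f (u + h *\<^sub>R axis a 1) - f (u + h *\<^sub>R axis b 1) + f u
    = h * h * ipd [b,a] f (u + s1 *\<^sub>R axis a 1 + t1 *\<^sub>R axis b 1)"
    using mv2[OF exab h(1) box[of a b]] by blast
  obtain s2 t2 where st2: "0 < s2" "s2 < h" "0 < t2" "t2 < h"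
    "f (u + h *\<^sub>R axis b 1 + h *\<^sub>R axis a 1) - f (u + h *\<^sub>R axis b 1) - f (u + h *\<^sub>R axis a 1) + f u
    = h * h * ipd [a,b] f (u + s2 *\<^sub>R axis b 1 + t2 *\<^sub>R axis a 1)"
    using mv2[OF exba h(1) box[of b a]] by blast
  have "h * h * ipd [b,a] f (u + s1 *\<^sub>R axis a 1 + t1 *\<^sub>R axis b 1)
      = h * h * ipd [a,b] f (u + s2 *\<^sub>R axis b 1 + t2 *\<^sub>R axis a 1)"
  proof -
    have D: "f (u + h *\<^sub>R axis a 1 + h *\<^sub>R axis b 1) - f (u + h *\<^sub>R axis a 1) - f (u + h *\<^sub>R axis b 1) + f u
      = f (u + h *\<^sub>R axis b 1 + h *\<^sub>R axis a 1) - f (u + h *\<^sub>R axis b 1) - f (u + h *\<^sub>R axis a 1) + f u"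
      by (simp add: add_ac)
    show ?thesis using D st1(5) st2(5) by (simp del: ipd.simps)
  qed
  then have eqp: "ipd [b,a] f (u + s1 *\<^sub>R axis a 1 + t1 *\<^sub>R axis b 1)
      = ipd [a,b] f (u + s2 *\<^sub>R axis b 1 + t2 *\<^sub>R axis a 1)" using h(1) by (simp del: ipd.simps)
  have "dist (u + s1 *\<^sub>R axis a 1 + t1 *\<^sub>R axis b 1) u < d2"
    using close[of s1 t1 a b] st1 h by linarith
  then have A: "dist (ipd [b,a] f (u + s1 *\<^sub>R axis a 1 + t1 *\<^sub>R axis b 1)) (ipd [b,a] f u) < e"
    using d2 by blast
  have "dist (u + s2 *\<^sub>R axis b 1 + t2 *\<^sub>R axis a 1) u < d1"
    using close[of s2 t2 b a] st2 h by linarith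
  then have B: "dist (ipd [a,b] f (u + s2 *\<^sub>R axis b 1 + t2 *\<^sub>R axis a 1)) (ipd [a,b] f u) < e"
    using d1 by blast
  from A B eqp have "\<bar>ipd [a,b] f u - ipd [b,a] f u\<bar> < 2 * e" by (simp add: dist_real_def del: ipd.simps)
  then show False by (simp add: e_def del: ipd.simps)
qed



lemma ck_swap:
  fixes f :: "real^'n \<Rightarrow> real"
  assumes ck: "Ck_near n f a" and len: "length (pre @ x # y # post) \<le> n"
  shows "ipd (pre @ x # y # post) f a = ipd (pre @ y # x # post) f a"
proof -
  obtain N where N: "open N" "a \<in> N"
    and H: "\<And>\<gamma>::'n list. length \<gamma> \<le> n \<Longrightarrow> (\<forall>u\<in>N. ipd_exists \<gamma> f u) \<and> continuous_on N (ipd \<gamma> f)"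
    using ck unfolding Ck_near_def by blast
  let ?g = "ipd post f"
  have ex: "ipd_exists zs ?g u" if "u \<in> N" "length zs \<le> 2" for zs u
    using H[of "zs @ post"] len that ipd_exists_append[of zs post f u] by auto
  have "\<forall>u\<in>N. ipd_exists [x] ?g u \<and> ipd_exists [y] ?g u \<and> ipd_exists [x,y] ?g u \<and> ipd_exists [y,x] ?g u"
    using ex[of _ "[x]"] ex[of _ "[y]"] ex[of _ "[x,y]"] ex[of _ "[y,x]"] by (simp del: ipd_exists.simps)
  moreover have "continuous_on N (ipd [x,y] ?g)"
    using H[of "[x,y] @ post"] len unfolding ipd_append by simp
  moreover have "continuous_on N (ipd [y,x] ?g)"
    using H[of "[y,x] @ post"] len unfolding ipd_append by simp
  ultimately have "\<forall>u\<in>N. ipd [x,y] ?g u = ipd [y,x] ?g u"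
    using schwarz[OF N(1)] by blast
  from ipd_local[OF N(1) this N(2)] have "ipd pre (ipd [x,y] ?g) a = ipd pre (ipd [y,x] ?g) a" .
  moreover have "ipd (pre @ x # y # post) f a = ipd pre (ipd [x,y] ?g) a"
  proof -
    have "pre @ x # y # post = pre @ ([x,y] @ post)" by simp
    then show ?thesis by (simp only: ipd_append)
  qed
  moreover have "ipd (pre @ y # x # post) f a = ipd pre (ipd [y,x] ?g) a"
  proof -
    have "pre @ y # x # post = pre @ ([y,x] @ post)" by simp
    then show ?thesis by (simp only: ipd_append)
  qed
  ultimately show ?thesis by simp
qed


lemma move_front:
  assumes sw: "\<forall>pre x y post. length (pre @ x # y # post) = n \<longrightarrow> c (pre @ x # y # post) = c (pre @ y # x # post)"
  shows "length (pre @ a # ys1 @ rest) = n \<Longrightarrow> c (pre @ a # ys1 @ rest) = c (pre @ ys1 @ a # rest)"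
proof (induction ys1 arbitrary: pre)
  case Nil then show ?case by simp
next
  case (Cons y ys1)
  have "c (pre @ a # y # ys1 @ rest) = c (pre @ y # a # ys1 @ rest)"
    using sw Cons.prems by simp
  also have "\<dots> = c ((pre @ [y]) @ a # ys1 @ rest)" by simp
  also have "\<dots> = c ((pre @ [y]) @ ys1 @ a # rest)" using Cons.IH[of "pre @ [y]"] Cons.prems by simp
  finally show ?case by simp
qed


lemma mset_inv:
  assumes sw: "\<forall>pre x y post. length (pre @ x # y # post) = n \<longrightarrow> c (pre @ x # y # post) = c (pre @ y # x # post)"
  shows "mset xs = mset ys \<Longrightarrow> length (pre @ xs) = n \<Longrightarrow> c (pre @ xs) = c (pre @ ys)"
proof (induction xs arbitrary: pre ys)
  case Nil then show ?case by simp
next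
  case (Cons a xs)
  have "a \<in># mset ys" using Cons.prems(1)[symmetric] by simp
  then have "a \<in> set ys" by simp
  then obtain ys1 ys2 where ys: "ys = ys1 @ a # ys2" by (meson split_list)
  have m: "mset xs = mset (ys1 @ ys2)" using Cons.prems(1) ys by simp
  have "c (pre @ a # xs) = c ((pre @ [a]) @ xs)" by simp
  also have "\<dots> = c ((pre @ [a]) @ ys1 @ ys2)" using Cons.IH[OF m, of "pre @ [a]"] Cons.prems(2) by simp
  also have "\<dots> = c (pre @ a # ys1 @ ys2)" by simp
  also have "\<dots> = c (pre @ ys1 @ a # ys2)"
  proof -
    have "length ys = Suc (length xs)" using mset_eq_length[OF Cons.prems(1)] by simp
    then have "length (pre @ a # ys1 @ ys2) = n" using Cons.prems(2) ys by simp
    then show ?thesis by (rule move_front[OF sw])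
  qed
  finally show ?case using ys by simp
qed




lemma util_surj:
  fixes good :: "'d::finite \<Rightarrow> 'k::finite"
  assumes "surj good" shows "\<exists>x \<beta>. util good x \<beta> = u"
proof -
  define x :: "real^'d" where "x = (\<chi> j. if j = inv good (good j) then u $ good j else 0)"
  define \<beta> :: "real^'d" where "\<beta> = (\<chi> j. 1)"
  have "util good x \<beta> $ k = u $ k" for k
  proof -
    have g: "good (inv good k) = k" using assms by (simp add: surj_f_inv_f)
    have "util good x \<beta> $ k = (\<Sum>j\<in>{j. good j = k}. if j = inv good k then u $ k else 0)"
      unfolding util_def x_def \<beta>_def by simp
    also have "\<dots> = u $ k" using g by (simp add: sum.delta')
    finally show ?thesis .
  qed
  then show ?thesis by (auto simp: vec_eq_iff)
qed

lemma V_at: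
  assumes A2: "assm2 good B D \<mu> Y"
  shows "Vfun \<mu> B D (util good x \<beta>) = ereal (ASFb \<mu> Y x \<beta> \<bullet> util good x \<beta>) + Dbar \<mu> B D (ASFb \<mu> Y x \<beta>)
    \<and> ASFb \<mu> Y x \<beta> \<in> convex hull B
    \<and> (\<exists>r. Dbar \<mu> B D (ASFb \<mu> Y x \<beta>) = ereal r)"
proof -
  let ?u = "util good x \<beta>" and ?y = "ASFb \<mu> Y x \<beta>"
  have "?y \<in> {y \<in> convex hull B. \<forall>z \<in> convex hull B.
               ereal (z \<bullet> ?u) + Dbar \<mu> B D z \<le> ereal (y \<bullet> ?u) + Dbar \<mu> B D y}"
    using A2 unfolding assm2_def by blast
  then have y: "?y \<in> convex hull B"
    and mx: "\<And>z. z \<in> convex hull B \<Longrightarrow> ereal (z \<bullet> ?u) + Dbar \<mu> B D z \<le> ereal (?y \<bullet> ?u) + Dbar \<mu> B D ?y"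
    by auto
  have V: "Vfun \<mu> B D ?u = ereal (?y \<bullet> ?u) + Dbar \<mu> B D ?y"
    unfolding Vfun_def
  proof (rule Sup_eqI)
    fix w assume "w \<in> {ereal (y \<bullet> ?u) + Dbar \<mu> B D y |y. y \<in> convex hull B}"
    then show "w \<le> ereal (?y \<bullet> ?u) + Dbar \<mu> B D ?y" using mx by auto
  next
    fix w assume "\<And>z. z \<in> {ereal (y \<bullet> ?u) + Dbar \<mu> B D y |y. y \<in> convex hull B} \<Longrightarrow> z \<le> w"
    then show "ereal (?y \<bullet> ?u) + Dbar \<mu> B D ?y \<le> w" using y by blast
  qed
  have ninf: "Dbar \<mu> B D ?y \<noteq> \<infinity>" using A2 unfolding assm2_def by blast
  obtain y0 where y0: "y0 \<in> convex hull B" "Dbar \<mu> B D y0 \<noteq> -\<infinity>" using A2 unfolding assm2_def by blast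
  have "Dbar \<mu> B D ?y \<noteq> -\<infinity>"
  proof
    assume "Dbar \<mu> B D ?y = -\<infinity>"
    then have "ereal (y0 \<bullet> ?u) + Dbar \<mu> B D y0 \<le> -\<infinity>" using mx[OF y0(1)] by simp
    then show False using y0(2) by simp
  qed
  with ninf have "\<exists>r. Dbar \<mu> B D ?y = ereal r" by (cases "Dbar \<mu> B D ?y") auto
  with V y show ?thesis by blast
qed

lemma envelope:
  assumes A2: "assm2 good B D \<mu> Y" and S: "surj good"
    and ex: "ipd_exists [k] (\<lambda>u. real_of_ereal (Vfun \<mu> B D u)) (util good x \<beta>)"
  shows "ASFb \<mu> Y x \<beta> $ k = ipd [k] (\<lambda>u. real_of_ereal (Vfun \<mu> B D u)) (util good x \<beta>)"
proof -
  let ?u = "util good x \<beta>" and ?y = "ASFb \<mu> Y x \<beta>" and ?V = "\<lambda>u. real_of_ereal (Vfun \<mu> B D u)"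
  obtain r where r: "Dbar \<mu> B D ?y = ereal r" and y: "?y \<in> convex hull B"
    and V: "Vfun \<mu> B D ?u = ereal (?y \<bullet> ?u + r)"
    using V_at[OF A2, of x \<beta>] by auto
  have low: "?y \<bullet> u' + r \<le> ?V u'" for u'
  proof -
    obtain x' \<beta>' where u': "util good x' \<beta>' = u'" using util_surj[OF S] by blast
    obtain r' where "Vfun \<mu> B D u' = ereal (ASFb \<mu> Y x' \<beta>' \<bullet> u' + r')"
      using V_at[OF A2, of x' \<beta>'] u' by auto
    moreover have "ereal (?y \<bullet> u') + Dbar \<mu> B D ?y \<le> Vfun \<mu> B D u'"
      unfolding Vfun_def by (rule Sup_upper) (use y in blast)
    ultimately show ?thesis using r by simp
  qed
  have h0: "?V ?u = ?y \<bullet> ?u + r" using V by simp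
  have "\<forall>t. ?V (?u + 0 *\<^sub>R axis k 1) + t * (?y $ k) \<le> ?V (?u + t *\<^sub>R axis k 1)"
  proof
    fix t
    have "?y \<bullet> (?u + t *\<^sub>R axis k 1) = ?y \<bullet> ?u + t * ?y $ k"
      by (simp add: inner_add_right inner_axis)
    then show "?V (?u + 0 *\<^sub>R axis k 1) + t * (?y $ k) \<le> ?V (?u + t *\<^sub>R axis k 1)"
      using low[of "?u + t *\<^sub>R axis k 1"] h0 by simp
  qed
  from deriv_min_eq[of "\<lambda>t. ?V (?u + t *\<^sub>R axis k 1)", OF _ this]
  show ?thesis using ex by simp
qed




lemma util_shift:
  "util good (x + t *\<^sub>R axis i 1) \<beta> = util good x \<beta> + (\<beta>$i * t) *\<^sub>R axis (good i) 1"
proof -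
  have "util good (x + t *\<^sub>R axis i 1) \<beta> $ k = (util good x \<beta> + (\<beta>$i * t) *\<^sub>R axis (good i) 1) $ k" for k
  proof -
    have "util good (x + t *\<^sub>R axis i 1) \<beta> $ k = (\<Sum>j\<in>{j. good j = k}. \<beta>$j * x$j + (if j = i then \<beta>$i * t else 0))"
      unfolding util_def by (simp add: axis_def algebra_simps, intro sum.cong) auto
    also have "\<dots> = util good x \<beta> $ k + (\<Sum>j\<in>{j. good j = k}. (if j = i then \<beta>$i * t else 0))"
      unfolding util_def by (simp add: sum.distrib)
    also have "\<dots> = (util good x \<beta> + (\<beta>$i * t) *\<^sub>R axis (good i) 1) $ k"
      by (simp add: axis_def)
    finally show ?thesis .
  qed
  then show ?thesis by (simp add: vec_eq_iff)
qed

lemma util_zero: "util good 0 \<beta> = 0"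
  by (simp add: util_def vec_eq_iff)

lemma util_cont: "continuous_on UNIV (\<lambda>x. util good x \<beta>)"
  unfolding util_def by (intro continuous_on_vec_lambda continuous_intros)

lemma mono_fn_Cons: "mono_fn (i#\<gamma>) \<beta> = \<beta>$i * mono_fn \<gamma> \<beta>"
  by (simp add: mono_fn_def)

lemma ipd_chain:
  fixes g :: "real^'k::finite \<Rightarrow> real" and good :: "'d::finite \<Rightarrow> 'k"
  assumes N: "open N" and ex: "\<forall>\<delta>. length \<delta> \<le> n \<longrightarrow> (\<forall>u\<in>N. ipd_exists \<delta> g u)"
  shows "length \<gamma> \<le> n \<Longrightarrow> util good x \<beta> \<in> N \<Longrightarrow>
    ipd \<gamma> (\<lambda>x. g (util good x \<beta>)) x = mono_fn \<gamma> \<beta> * ipd (map good \<gamma>) g (util good x \<beta>)"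
proof (induction \<gamma> arbitrary: x)
  case Nil then show ?case by (simp add: mono_fn_def)
next
  case (Cons i \<gamma>)
  let ?L = "\<lambda>x. util good x \<beta>"
  let ?U = "?L -` N"
  have U: "open ?U" using continuous_on_open_vimage[OF open_UNIV, THEN iffD1, OF util_cont, rule_format, OF N] by simp
  define \<phi> where "\<phi> s = ipd (map good \<gamma>) g (?L x + s *\<^sub>R axis (good i) 1)" for s
  define D where "D = ipd (good i # map good \<gamma>) g (?L x)"
  have "\<forall>\<^sub>F t in nhds 0. x + t *\<^sub>R axis i 1 \<in> ?U" using ev_line[OF U] Cons.prems(2) by simp
  then have ev: "\<forall>\<^sub>F t in nhds 0. ipd \<gamma> (\<lambda>x. g (?L x)) (x + t *\<^sub>R axis i 1) = mono_fn \<gamma> \<beta> * \<phi> (\<beta>$i * t)"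
  proof (rule eventually_mono)
    fix t assume "x + t *\<^sub>R axis i 1 \<in> ?U"
    then show "ipd \<gamma> (\<lambda>x. g (?L x)) (x + t *\<^sub>R axis i 1) = mono_fn \<gamma> \<beta> * \<phi> (\<beta>$i * t)"
      using Cons.IH[of "x + t *\<^sub>R axis i 1"] Cons.prems(1) by (simp add: util_shift \<phi>_def)
  qed
  have "ipd_exists (good i # map good \<gamma>) g (?L x + 0 *\<^sub>R axis (good i) 1)"
    using ex[rule_format, of "good i # map good \<gamma>" "?L x"] Cons.prems by (simp del: ipd_exists.simps)
  from pd_DERIV[OF this] have "(\<phi> has_real_derivative D) (at (\<beta>$i * 0))"
    unfolding \<phi>_def[abs_def] D_def by simp
  from DERIV_chain2[OF this DERIV_cmult[OF DERIV_ident, of "\<beta>$i" 0]]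
  have "((\<lambda>t. \<phi> (\<beta>$i * t)) has_real_derivative D * (\<beta>$i * 1)) (at 0)" .
  from DERIV_cmult[OF this, of "mono_fn \<gamma> \<beta>"]
  have "((\<lambda>t. mono_fn \<gamma> \<beta> * \<phi> (\<beta>$i * t)) has_real_derivative mono_fn \<gamma> \<beta> * (D * (\<beta>$i * 1))) (at 0)" .
  then have "deriv (\<lambda>t. mono_fn \<gamma> \<beta> * \<phi> (\<beta>$i * t)) 0 = mono_fn \<gamma> \<beta> * (D * (\<beta>$i * 1))"
    by (rule DERIV_imp_deriv)
  moreover have "deriv (\<lambda>t. ipd \<gamma> (\<lambda>x. g (?L x)) (x + t *\<^sub>R axis i 1)) 0 = deriv (\<lambda>t. mono_fn \<gamma> \<beta> * \<phi> (\<beta>$i * t)) 0"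
    using deriv_cong_ev[OF ev refl] .
  ultimately show ?case unfolding D_def by (simp add: mono_fn_Cons)
qed




lemma spec_surj:
  assumes S: "spec_ok good j0 Mbar B D \<mu> \<nu> Y" and M: "1 \<le> M" "enat M \<le> Mbar"
  shows "surj good"
proof -
  have A6: "assm6 M good \<nu>" using S M unfolding spec_ok_def by blast
  have "\<exists>j. good j = k'" for k'
  proof -
    obtain \<gamma> where g: "map good \<gamma> = replicate M k'" using A6[unfolded assm6_def, rule_format, of "replicate M k'"] by auto
    then have "\<gamma> \<noteq> []" using M by auto
    then have "good (hd \<gamma>) \<in> set (map good \<gamma>)" by simp
    then show ?thesis using g by auto
  qed
  then show ?thesis by (metis surjI)
qed

lemma spec_formula:
  fixes good :: "'d::finite \<Rightarrow> 'k::finite"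
  assumes S: "spec_ok good j0 Mbar B D \<mu> \<nu> Y" and M: "1 \<le> M" "enat M \<le> Mbar" and len: "length \<gamma> = M"
  shows "ipd \<gamma> (\<lambda>x. ASF \<nu> \<mu> Y x $ k) 0
     = (\<integral>\<beta>. mono_fn \<gamma> \<beta> \<partial>\<nu>) * ipd (map good \<gamma> @ [k]) (\<lambda>u. real_of_ereal (Vfun \<mu> B D u)) 0"
proof -
  let ?V = "\<lambda>u. real_of_ereal (Vfun \<mu> B D u)"
  have A2: "assm2 good B D \<mu> Y" and A5: "assm5 M B D \<mu> \<nu> Y" using S M unfolding spec_ok_def by blast+
  have surj: "surj good" using spec_surj[OF S M] .
  obtain N where N: "open N" "0 \<in> N"
    and H: "\<And>\<delta>::'k list. length \<delta> \<le> Suc M \<Longrightarrow> (\<forall>u\<in>N. ipd_exists \<delta> ?V u) \<and> continuous_on N (ipd \<delta> ?V)"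
    using A5 unfolding assm5_def Ck_near_def by blast
  let ?g = "ipd [k] ?V"
  have ex: "\<forall>\<delta>. length \<delta> \<le> M \<longrightarrow> (\<forall>u\<in>N. ipd_exists \<delta> ?g u)"
  proof (intro allI impI ballI)
    fix \<delta> :: "'k list" and u assume "length \<delta> \<le> M" "u \<in> N"
    then have "ipd_exists (\<delta> @ [k]) ?V u" using H[of "\<delta> @ [k]"] by simp
    then show "ipd_exists \<delta> ?g u" by (rule ipd_exists_append)
  qed
  have per\<beta>: "ipd \<gamma> (\<lambda>x. ASFb \<mu> Y x \<beta> $ k) 0 = mono_fn \<gamma> \<beta> * ipd (map good \<gamma> @ [k]) ?V 0" for \<beta>
  proof -
    let ?U = "(\<lambda>x. util good x \<beta>) -` N"
    have U: "open ?U" using continuous_on_open_vimage[OF open_UNIV, THEN iffD1, OF util_cont, rule_format, OF N(1)] by simp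
    have U0: "0 \<in> ?U" using N(2) by (simp add: util_zero)
    have "\<forall>x\<in>?U. ASFb \<mu> Y x \<beta> $ k = ?g (util good x \<beta>)"
    proof
      fix x assume "x \<in> ?U"
      then have "ipd_exists [k] ?V (util good x \<beta>)" using H[of "[k]"] by simp
      from envelope[OF A2 surj this] show "ASFb \<mu> Y x \<beta> $ k = ?g (util good x \<beta>)" .
    qed
    from ipd_local[OF U this U0]
    have "ipd \<gamma> (\<lambda>x. ASFb \<mu> Y x \<beta> $ k) 0 = ipd \<gamma> (\<lambda>x. ?g (util good x \<beta>)) 0" .
    also have "\<dots> = mono_fn \<gamma> \<beta> * ipd (map good \<gamma>) ?g (util good 0 \<beta>)"
      using ipd_chain[OF N(1) ex, where \<gamma>=\<gamma> and x=0 and \<beta>=\<beta>] len N(2) by (simp add: util_zero del: ipd.simps)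
    also have "\<dots> = mono_fn \<gamma> \<beta> * ipd (map good \<gamma> @ [k]) ?V 0"
      by (simp only: util_zero ipd_append)
    finally show ?thesis .
  qed
  have "ipd \<gamma> (\<lambda>x. ASF \<nu> \<mu> Y x $ k) 0 = (\<integral>\<beta>. ipd \<gamma> (\<lambda>x. ASFb \<mu> Y x \<beta> $ k) 0 \<partial>\<nu>)"
    using A5 len unfolding assm5_def by blast
  also have "\<dots> = (\<integral>\<beta>. mono_fn \<gamma> \<beta> * ipd (map good \<gamma> @ [k]) ?V 0 \<partial>\<nu>)"
    by (simp only: per\<beta>)
  also have "\<dots> = (\<integral>\<beta>. mono_fn \<gamma> \<beta> \<partial>\<nu>) * ipd (map good \<gamma> @ [k]) ?V 0"
    by (rule integral_mult_left_zero)
  finally show ?thesis .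
qed




lemma ident_comb:
  fixes c1 c2 :: "'k list \<Rightarrow> real" and m1 m2 :: "'d list \<Rightarrow> real" and good :: "'d \<Rightarrow> 'k"
  assumes F1: "\<forall>k \<gamma>. length \<gamma> = M \<longrightarrow> c1 (map good \<gamma> @ [k]) * m1 \<gamma> = c2 (map good \<gamma> @ [k]) * m2 \<gamma>"
    and F2: "\<forall>ks. length ks = Suc M \<longrightarrow> c1 ks \<noteq> 0 \<and> c2 ks \<noteq> 0"
    and F3: "\<forall>xs ys. mset xs = mset ys \<longrightarrow> length xs = Suc M \<longrightarrow> c1 xs = c1 ys \<and> c2 xs = c2 ys"
    and F4: "m1 (replicate M j0) \<noteq> 0" "m1 (replicate M j0) = m2 (replicate M j0)"
    and F5: "\<forall>ks. length ks = M \<longrightarrow> (\<exists>\<gamma>. map good \<gamma> = ks \<and> m1 \<gamma> \<noteq> 0)"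
    and len: "length \<gamma> = M"
  shows "m1 \<gamma> = m2 \<gamma>"
proof -
  let ?g0 = "good j0"
  have Q: "\<forall>zs k. length zs = p \<longrightarrow> p \<le> M \<longrightarrow> c1 (replicate (M - p) ?g0 @ zs @ [k]) = c2 (replicate (M - p) ?g0 @ zs @ [k])" for p
  proof (induction p)
    case 0
    show ?case
    proof (intro allI impI)
      fix zs :: "'k list" and k assume "length zs = 0"
      then have zs: "zs = []" by simp
      have "c1 (map good (replicate M j0) @ [k]) * m1 (replicate M j0) = c2 (map good (replicate M j0) @ [k]) * m2 (replicate M j0)"
        using F1[rule_format, of "replicate M j0" k] by simp
      then have "c1 (replicate M ?g0 @ [k]) = c2 (replicate M ?g0 @ [k])" using F4 by simp
      then show "c1 (replicate (M - 0) ?g0 @ zs @ [k]) = c2 (replicate (M - 0) ?g0 @ zs @ [k])" using zs by simp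
    qed
  next
    case (Suc p)
    show ?case
    proof (intro allI impI)
      fix zs :: "'k list" and k assume zs: "length zs = Suc p" and pM: "Suc p \<le> M"
      then obtain z zs' where zz: "zs = z # zs'" "length zs' = p" by (cases zs) auto
      obtain q where q: "M - p = Suc q" "M - Suc p = q" using pM by (metis Suc_diff_Suc Suc_le_lessD diff_Suc_1)
      define ks where "ks = replicate q ?g0 @ z # zs'"
      have lks: "length ks = M" using q zz pM by (simp add: ks_def)
      obtain \<gamma> where \<gamma>: "map good \<gamma> = ks" "m1 \<gamma> \<noteq> 0" using F5 lks by blast
      have l\<gamma>: "length \<gamma> = M" using \<gamma>(1) lks by auto
      have ms: "mset (ks @ [?g0]) = mset (replicate (M - p) ?g0 @ zs' @ [z])"
        unfolding ks_def q(1) by simp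
      have l1: "length (ks @ [?g0]) = Suc M" using lks by simp
      have "c1 (ks @ [?g0]) = c1 (replicate (M - p) ?g0 @ zs' @ [z])"
        "c2 (ks @ [?g0]) = c2 (replicate (M - p) ?g0 @ zs' @ [z])"
        using F3 ms l1 by blast+
      moreover have "c1 (replicate (M - p) ?g0 @ zs' @ [z]) = c2 (replicate (M - p) ?g0 @ zs' @ [z])"
        using Suc.IH zz pM by simp
      ultimately have C: "c1 (ks @ [?g0]) = c2 (ks @ [?g0])" by simp
      have "c1 (ks @ [?g0]) * m1 \<gamma> = c2 (ks @ [?g0]) * m2 \<gamma>" using F1 l\<gamma> \<gamma>(1) by metis
      then have mm: "m1 \<gamma> = m2 \<gamma>" using C F2 l1 by simp
      have "c1 (ks @ [k]) * m1 \<gamma> = c2 (ks @ [k]) * m2 \<gamma>" using F1 l\<gamma> \<gamma>(1) by metis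
      then have "c1 (ks @ [k]) = c2 (ks @ [k])" using mm \<gamma>(2) by simp
      then show "c1 (replicate (M - Suc p) ?g0 @ zs @ [k]) = c2 (replicate (M - Suc p) ?g0 @ zs @ [k])"
        unfolding ks_def q(2) zz by simp
    qed
  qed
  have "c1 (map good \<gamma> @ [?g0]) = c2 (map good \<gamma> @ [?g0])"
    using Q[of M, rule_format, of "map good \<gamma>" ?g0] len by simp
  moreover have "c1 (map good \<gamma> @ [?g0]) * m1 \<gamma> = c2 (map good \<gamma> @ [?g0]) * m2 \<gamma>" using F1 len by blast
  moreover have "c1 (map good \<gamma> @ [?g0]) \<noteq> 0" using F2 len by simp
  ultimately show ?thesis by simp
qed




lemma mono_rep: "mono_fn (replicate M j0) \<beta> = (\<beta>$j0) ^ M"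
  by (simp add: mono_fn_def prod_list_replicate)

theorem corollary1:
  fixes good :: "'d::finite \<Rightarrow> 'k::finite" and j0 :: 'd and Mbar :: enat
    and B1 :: "(real^'k) set" and D1 :: "real^'k \<Rightarrow> 'e1 \<Rightarrow> ereal" and \<mu>1 :: "'e1 measure"
    and \<nu>1 :: "(real^'d) measure" and Y1 :: "real^'d \<Rightarrow> real^'d \<Rightarrow> 'e1 \<Rightarrow> real^'k"
    and B2 :: "(real^'k) set" and D2 :: "real^'k \<Rightarrow> 'e2 \<Rightarrow> ereal" and \<mu>2 :: "'e2 measure"
    and \<nu>2 :: "(real^'d) measure" and Y2 :: "real^'d \<Rightarrow> real^'d \<Rightarrow> 'e2 \<Rightarrow> real^'k"
    and H :: "(real^'d) set"
  assumes "1 \<le> Mbar"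
    and "spec_ok good j0 Mbar B1 D1 \<mu>1 \<nu>1 Y1"
    and "spec_ok good j0 Mbar B2 D2 \<mu>2 \<nu>2 Y2"
    and "moment_determinate Mbar \<nu>1"
    and "moment_determinate Mbar \<nu>2"
    and "open H" and "0 \<in> H"
    and "\<forall>x\<in>H. (\<forall>j. 0 \<le> x$j) \<longrightarrow> ASF \<nu>1 \<mu>1 Y1 x = ASF \<nu>2 \<mu>2 Y2 x"
    and "\<forall>M. 1 \<le> M \<and> enat M \<le> Mbar \<longrightarrow> (\<integral>\<beta>. (\<beta>$j0) ^ M \<partial>\<nu>1) = (\<integral>\<beta>. (\<beta>$j0) ^ M \<partial>\<nu>2)"
  shows "\<nu>1 = \<nu>2"
proof -
  note S1 = assms(2) and S2 = assms(3) and Hop = assms(6) and H0 = assms(7) and Heq = assms(8) and mom = assms(9)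
  let ?V1 = "\<lambda>u. real_of_ereal (Vfun \<mu>1 B1 D1 u)"
  let ?V2 = "\<lambda>u. real_of_ereal (Vfun \<mu>2 B2 D2 u)"
  have moments: "(\<integral>\<beta>. mono_fn \<gamma> \<beta> \<partial>\<nu>1) = (\<integral>\<beta>. mono_fn \<gamma> \<beta> \<partial>\<nu>2)"
    if M: "1 \<le> M" "enat M \<le> Mbar" and len: "length \<gamma> = M" for M \<gamma>
  proof -
    have A4: "assm4 M j0 \<nu>1" and A51: "assm5 M B1 D1 \<mu>1 \<nu>1 Y1" and A61: "assm6 M good \<nu>1"
      using S1 M unfolding spec_ok_def by blast+
    have A52: "assm5 M B2 D2 \<mu>2 \<nu>2 Y2"
      using S2 M unfolding spec_ok_def by blast+
    define c1 where "c1 ks = ipd ks ?V1 0" for ks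
    define c2 where "c2 ks = ipd ks ?V2 0" for ks
    define m1 where "m1 \<gamma> = (\<integral>\<beta>. mono_fn \<gamma> \<beta> \<partial>\<nu>1)" for \<gamma>
    define m2 where "m2 \<gamma> = (\<integral>\<beta>. mono_fn \<gamma> \<beta> \<partial>\<nu>2)" for \<gamma>
    have F1: "\<forall>k \<gamma>. length \<gamma> = M \<longrightarrow> c1 (map good \<gamma> @ [k]) * m1 \<gamma> = c2 (map good \<gamma> @ [k]) * m2 \<gamma>"
    proof (intro allI impI)
      fix k and \<gamma> :: "'d list" assume l: "length \<gamma> = M"
      have e1: "ipd_exists \<gamma> (\<lambda>x. ASF \<nu>1 \<mu>1 Y1 x $ k) 0" using A51 l unfolding assm5_def by blast
      have e2: "ipd_exists \<gamma> (\<lambda>x. ASF \<nu>2 \<mu>2 Y2 x $ k) 0" using A52 l unfolding assm5_def by blast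
      have "\<forall>x\<in>H. (\<forall>j. 0 \<le> x$j) \<longrightarrow> ASF \<nu>1 \<mu>1 Y1 x $ k = ASF \<nu>2 \<mu>2 Y2 x $ k" using Heq by simp
      from ipd_orthant[OF Hop this H0 _ e1 e2]
      have "ipd \<gamma> (\<lambda>x. ASF \<nu>1 \<mu>1 Y1 x $ k) 0 = ipd \<gamma> (\<lambda>x. ASF \<nu>2 \<mu>2 Y2 x $ k) 0" by simp
      then show "c1 (map good \<gamma> @ [k]) * m1 \<gamma> = c2 (map good \<gamma> @ [k]) * m2 \<gamma>"
        unfolding c1_def c2_def m1_def m2_def
        using spec_formula[OF S1 M l, of k] spec_formula[OF S2 M l, of k] by (simp add: mult.commute)
    qed
    have F2: "\<forall>ks. length ks = Suc M \<longrightarrow> c1 ks \<noteq> 0 \<and> c2 ks \<noteq> 0"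
      using A51 A52 unfolding assm5_def c1_def c2_def by blast
    have ck1: "Ck_near (Suc M) ?V1 0" and ck2: "Ck_near (Suc M) ?V2 0"
      using A51 A52 unfolding assm5_def by blast+
    have sw1: "\<forall>pre x y post. length (pre @ x # y # post) = Suc M \<longrightarrow> c1 (pre @ x # y # post) = c1 (pre @ y # x # post)"
      unfolding c1_def using ck_swap[OF ck1] by simp
    have sw2: "\<forall>pre x y post. length (pre @ x # y # post) = Suc M \<longrightarrow> c2 (pre @ x # y # post) = c2 (pre @ y # x # post)"
      unfolding c2_def using ck_swap[OF ck2] by simp
    have F3: "\<forall>xs ys. mset xs = mset ys \<longrightarrow> length xs = Suc M \<longrightarrow> c1 xs = c1 ys \<and> c2 xs = c2 ys"
      using mset_inv[OF sw1, of _ _ "[]"] mset_inv[OF sw2, of _ _ "[]"] by simp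
    have F4: "m1 (replicate M j0) \<noteq> 0" "m1 (replicate M j0) = m2 (replicate M j0)"
      using A4 mom M unfolding assm4_def m1_def m2_def mono_rep by auto
    have F5: "\<forall>ks. length ks = M \<longrightarrow> (\<exists>\<gamma>. map good \<gamma> = ks \<and> m1 \<gamma> \<noteq> 0)"
      using A61 unfolding assm6_def m1_def by blast
    from ident_comb[OF F1 F2 F3 F4 F5 len] show ?thesis unfolding m1_def m2_def .
  qed
  have "prob_space \<nu>2" "sets \<nu>2 = sets borel" using S2 unfolding spec_ok_def assm1_def by blast+
  moreover have "\<forall>\<gamma>::'d list. 1 \<le> length \<gamma> \<and> enat (length \<gamma>) \<le> Mbar \<longrightarrow>
            integrable \<nu>2 (mono_fn \<gamma>) \<and> (\<integral>\<beta>. mono_fn \<gamma> \<beta> \<partial>\<nu>2) = (\<integral>\<beta>. mono_fn \<gamma> \<beta> \<partial>\<nu>1)"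
  proof (intro allI impI conjI)
    fix \<gamma> :: "'d list" assume l: "1 \<le> length \<gamma> \<and> enat (length \<gamma>) \<le> Mbar"
    then have "assm5 (length \<gamma>) B2 D2 \<mu>2 \<nu>2 Y2" using S2 unfolding spec_ok_def by blast
    then show "integrable \<nu>2 (mono_fn \<gamma>)" unfolding assm5_def by blast
    show "(\<integral>\<beta>. mono_fn \<gamma> \<beta> \<partial>\<nu>2) = (\<integral>\<beta>. mono_fn \<gamma> \<beta> \<partial>\<nu>1)"
      using moments[of "length \<gamma>" \<gamma>] l by simp
  qed
  ultimately show ?thesis using assms(4) unfolding moment_determinate_def by auto
qed


end
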